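(* Let $\Lambda$ be a left cancellative small category with no nontrivial invertible morphisms (i.e. every invertible morphism is an identity). Then the equivalence relations $\sim_1$ and $\sim_2$ on $\mathcal Z*X$ coincide; consequently $G_1(\Lambda)=G_2(\Lambda)$.
   Context: A left cancellative small category (LCSC) is a small category $\Lambda$ such that $\alpha\beta=\alpha\gamma$ implies $\beta=\gamma$. Morphisms are composed as $\alpha\beta$ when $s(\alpha)=r(\beta)$; $\Lambda^0$ is the set of objects, identified with identity morphisms; $v\Lambda=\{\alpha:r(\alpha)=v\}$; $\alpha\Lambda=\{\alpha\beta:r(\beta)=s(\alpha)\}$. For $\alpha\in\Lambda$, $\tau^\alpha:s(\alpha)\Lambda\to r(\alpha)\Lambda$, $\tau^\alpha(\beta)=\alpha\beta$, and $\sigma^\alpha:\alpha\Lambda\to s(\alpha)\Lambda$ is its inverse. A zigzag is a tuple $\zeta=(\alpha_1,\beta_1,\dots,\alpha_n,\beta_n)$ in $\Lambda$ with $r(\alpha_i)=r(\beta_i)$ for all $i$ and $s(\alpha_{i+1})=s(\beta_i)$ for $i<n$; $\mathcal Z$ is the set of zigzags, $s(\zeta)=s(\beta_n)$, $r(\zeta)=s(\alpha_1)$, $\mathcal Zv=\{\zeta:s(\zeta)=v\}$, $\overline\zeta=(\beta_n,\alpha_n,\dots,\beta_1,\alpha_1)$, and composable zigzags are concatenated as tuples. The zigzag map is the partial injective map $\varphi_\zeta=\sigma^{\alpha_1}\circ\tau^{\beta_1}\circ\cdots\circ\sigma^{\alpha_n}\circ\tau^{\beta_n}$ with domain $A(\zeta)\subseteq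 s(\zeta)\Lambda$ and range $A(\overline\zeta)$. For $v\in\Lambda^0$, $\mathcal D^{(0)}_v$ is the set of nonempty sets $A(\zeta)$, $\zeta\in\mathcal Zv$, and $\mathcal A_v$ is the ring of subsets of $v\Lambda$ generated by $\mathcal D^{(0)}_v$. $X_v$ is the set of ultrafilters in the ring $\mathcal A_v$ (a filter: nonempty family of nonempty members of $\mathcal A_v$ closed under intersections and supersets in $\mathcal A_v$; ultrafilter: maximal filter), with $\mathcal U_x$ denoting the ultrafilter $x$, topologized by the compact open basic sets $\widehat E=\{x\in X_v:E\in\mathcal U_x\}$, $E\in\mathcal A_v$; $X=\bigsqcup_vX_v$ and $r(x)=v$ for $x\in X_v$. For $\zeta\in\mathcal Z$ and $x\in\widehat{A(\zeta)}$, $\{\varphi_\zeta(E\cap A(\zeta)):E\in\mathcal U_x\}$ is a base for a unique ultrafilter of $\mathcal A_{r(\zeta)}$, denoted $\Phi_\zeta(x)$; $\Phi_\zeta:\widehat{A(\zeta)}\to\widehat{A(\overline\zeta)}$ is a homeomorphism. Let $\mathcal Z*X=\{(\zeta,x):s(\zeta)=r(x),\ x\in\widehat{A(\zeta)}\}$. Define $(\zeta,x)\sim_1(\zeta',x')$ iff $x=x'$ and $\Phi_\zeta|_{\widehat E}=\Phi_{\zeta'}|_{\widehat E}$ for some $E\in\mathcal U_x$; and $(\zeta,x)\sim_2(\zeta',x')$ iff $x=x'$ and $\varphi_\zeta|_E=\varphi_{\zeta'}|_E$ for some $E\in\mathcal U_x$. $G_i(\Lambda)=(\mathcal Z*X)/\sim_i$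 ($i=1,2$), with product $[\zeta,\Phi_{\zeta'}(x)][\zeta',x]=[\zeta\zeta',x]$ and inverse $[\zeta,x]^{-1}=[\overline\zeta,\Phi_\zeta(x)]$. *)

theory Defs
  imports Main
begin

text \<open>A small category whose objects are identified with identity morphisms.\<close>
record 'a cat =
  Mor :: "'a set"
  Src :: "'a \<Rightarrow> 'a"
  Rng :: "'a \<Rightarrow> 'a"
  Cmp :: "'a \<Rightarrow> 'a \<Rightarrow> 'a"

definition Obj :: "('a, 'b) cat_scheme \<Rightarrow> 'a set" where
  "Obj C = {a \<in> Mor C. Src C a = a}"

definition small_category :: "('a, 'b) cat_scheme \<Rightarrow> bool" where
  "small_category C \<longleftrightarrow>
     (\<forall>a\<in>Mor C. Src C a \<in> Mor C \<and> Rng C a \<in> Mor C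
        \<and> Src C (Src C a) = Src C a \<and> Rng C (Src C a) = Src C a
        \<and> Src C (Rng C a) = Rng C a \<and> Rng C (Rng C a) = Rng C a
        \<and> Cmp C (Rng C a) a = a \<and> Cmp C a (Src C a) = a)
   \<and> (\<forall>a\<in>Mor C. \<forall>b\<in>Mor C. Src C a = Rng C b \<longrightarrow>
        Cmp C a b \<in> Mor C \<and> Src C (Cmp C a b) = Src C b \<and> Rng C (Cmp C a b) = Rng C a)
   \<and> (\<forall>a\<in>Mor C. \<forall>b\<in>Mor C. \<forall>c\<in>Mor C. Src C a = Rng C b \<longrightarrow> Src C b = Rng C c \<longrightarrow>
        Cmp C (Cmp C a b) c = Cmp C a (Cmp C b c))"

definition left_cancellative :: "('a, 'b) cat_scheme \<Rightarrow> bool" where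
  "left_cancellative C \<longleftrightarrow>
     (\<forall>a\<in>Mor C. \<forall>b\<in>Mor C. \<forall>c\<in>Mor C. Src C a = Rng C b \<longrightarrow> Src C a = Rng C c \<longrightarrow>
        Cmp C a b = Cmp C a c \<longrightarrow> b = c)"

definition LCSC :: "('a, 'b) cat_scheme \<Rightarrow> bool" where
  "LCSC C \<longleftrightarrow> small_category C \<and> left_cancellative C"

definition invertible_mor :: "('a, 'b) cat_scheme \<Rightarrow> 'a \<Rightarrow> bool" where
  "invertible_mor C a \<longleftrightarrow> a \<in> Mor C \<and>
     (\<exists>b\<in>Mor C. Src C a = Rng C b \<and> Src C b = Rng C a
        \<and> Cmp C a b = Rng C a \<and> Cmp C b a = Src C a)"

definition no_nontrivial_invertibles :: "('a, 'b) cat_scheme \<Rightarrow> bool" where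
  "no_nontrivial_invertibles C \<longleftrightarrow> (\<forall>a. invertible_mor C a \<longrightarrow> a \<in> Obj C)"

definition tau :: "('a, 'b) cat_scheme \<Rightarrow> 'a \<Rightarrow> 'a \<Rightarrow> 'a option" where
  "tau C b g = (if g \<in> Mor C \<and> Rng C g = Src C b then Some (Cmp C b g) else None)"

definition sigma :: "('a, 'b) cat_scheme \<Rightarrow> 'a \<Rightarrow> 'a \<Rightarrow> 'a option" where
  "sigma C a d = (if \<exists>g\<in>Mor C. Rng C g = Src C a \<and> Cmp C a g = d
                  then Some (THE g. g \<in> Mor C \<and> Rng C g = Src C a \<and> Cmp C a g = d) else None)"

text \<open>A zigzag (\<alpha>1,\<beta>1,...,\<alpha>n,\<beta>n), n \<ge> 1, is the list of pairs [(\<alpha>1,\<beta>1),...,(\<alpha>n,\<beta>n)].\<close>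
definition is_zigzag :: "('a, 'b) cat_scheme \<Rightarrow> ('a \<times> 'a) list \<Rightarrow> bool" where
  "is_zigzag C z \<longleftrightarrow> z \<noteq> []
     \<and> (\<forall>(a, b)\<in>set z. a \<in> Mor C \<and> b \<in> Mor C \<and> Rng C a = Rng C b)
     \<and> (\<forall>i. Suc i < length z \<longrightarrow> Src C (fst (z ! Suc i)) = Src C (snd (z ! i)))"

definition zsrc :: "('a, 'b) cat_scheme \<Rightarrow> ('a \<times> 'a) list \<Rightarrow> 'a" where
  "zsrc C z = Src C (snd (last z))"

definition zrng :: "('a, 'b) cat_scheme \<Rightarrow> ('a \<times> 'a) list \<Rightarrow> 'a" where
  "zrng C z = Src C (fst (hd z))"

definition zrev :: "('a \<times> 'a) list \<Rightarrow> ('a \<times> 'a) list" where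
  "zrev z = rev (map (\<lambda>(a, b). (b, a)) z)"

text \<open>The zigzag map \<phi>_\<zeta> = \<sigma>^\<alpha>1 \<circ> \<tau>^\<beta>1 \<circ> ... \<circ> \<sigma>^\<alpha>n \<circ> \<tau>^\<beta>n as a partial map.\<close>
fun zmap :: "('a, 'b) cat_scheme \<Rightarrow> ('a \<times> 'a) list \<Rightarrow> 'a \<Rightarrow> 'a option" where
  "zmap C [] g = Some g"
| "zmap C ((a, b) # z) g = Option.bind (zmap C z g) (\<lambda>h. Option.bind (tau C b h) (sigma C a))"

definition Adom :: "('a, 'b) cat_scheme \<Rightarrow> ('a \<times> 'a) list \<Rightarrow> 'a set" where
  "Adom C z = {g. zmap C z g \<noteq> None}"

definition zimage :: "('a, 'b) cat_scheme \<Rightarrow> ('a \<times> 'a) list \<Rightarrow> 'a set \<Rightarrow> 'a set" where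
  "zimage C z E = {h. \<exists>g\<in>E. zmap C z g = Some h}"

inductive_set gen_ring :: "'a set set \<Rightarrow> 'a set set" for F where
  gr_empty: "{} \<in> gen_ring F"
| gr_base: "A \<in> F \<Longrightarrow> A \<in> gen_ring F"
| gr_union: "A \<in> gen_ring F \<Longrightarrow> B \<in> gen_ring F \<Longrightarrow> A \<union> B \<in> gen_ring F"
| gr_diff: "A \<in> gen_ring F \<Longrightarrow> B \<in> gen_ring F \<Longrightarrow> A - B \<in> gen_ring F"

definition D0 :: "('a, 'b) cat_scheme \<Rightarrow> 'a \<Rightarrow> 'a set set" where
  "D0 C v = {Adom C z | z. is_zigzag C z \<and> zsrc C z = v \<and> Adom C z \<noteq> {}}"

definition Aring :: "('a, 'b) cat_scheme \<Rightarrow> 'a \<Rightarrow> 'a set set" where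
  "Aring C v = gen_ring (D0 C v)"

definition is_filter_in :: "'a set set \<Rightarrow> 'a set set \<Rightarrow> bool" where
  "is_filter_in R U \<longleftrightarrow> U \<noteq> {} \<and> U \<subseteq> R \<and> {} \<notin> U
     \<and> (\<forall>E\<in>U. \<forall>F\<in>U. E \<inter> F \<in> U)
     \<and> (\<forall>E\<in>U. \<forall>F\<in>R. E \<subseteq> F \<longrightarrow> F \<in> U)"

definition is_ultrafilter_in :: "'a set set \<Rightarrow> 'a set set \<Rightarrow> bool" where
  "is_ultrafilter_in R U \<longleftrightarrow> is_filter_in R U
     \<and> (\<forall>U'. is_filter_in R U' \<longrightarrow> U \<subseteq> U' \<longrightarrow> U' = U)"

text \<open>X = disjoint union of X_v; a point is a pair (v, U_x).\<close>
definition Xsp :: "('a, 'b) cat_scheme \<Rightarrow> ('a \<times> 'a set set) set" where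
  "Xsp C = {(v, U). v \<in> Obj C \<and> is_ultrafilter_in (Aring C v) U}"

definition hatE :: "('a, 'b) cat_scheme \<Rightarrow> 'a \<Rightarrow> 'a set \<Rightarrow> ('a \<times> 'a set set) set" where
  "hatE C v E = {(w, U) \<in> Xsp C. w = v \<and> E \<in> U}"

definition Phi :: "('a, 'b) cat_scheme \<Rightarrow> ('a \<times> 'a) list \<Rightarrow> ('a \<times> 'a set set)
                   \<Rightarrow> ('a \<times> 'a set set) option" where
  "Phi C z x = (if x \<in> hatE C (zsrc C z) (Adom C z)
      then Some (zrng C z, {F \<in> Aring C (zrng C z).
                   \<exists>E\<in>snd x. zimage C z (E \<inter> Adom C z) \<subseteq> F})
      else None)"

definition ZX :: "('a, 'b) cat_scheme \<Rightarrow> (('a \<times> 'a) list \<times> ('a \<times> 'a set set)) set" where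
  "ZX C = {(z, x). is_zigzag C z \<and> x \<in> Xsp C \<and> zsrc C z = fst x \<and> Adom C z \<in> snd x}"

definition sim1 :: "('a, 'b) cat_scheme \<Rightarrow> (('a \<times> 'a) list \<times> ('a \<times> 'a set set))
                    \<Rightarrow> (('a \<times> 'a) list \<times> ('a \<times> 'a set set)) \<Rightarrow> bool" where
  "sim1 C p q \<longleftrightarrow> snd p = snd q \<and>
     (\<exists>E\<in>snd (snd p). \<forall>y\<in>hatE C (fst (snd p)) E. Phi C (fst p) y = Phi C (fst q) y)"

definition sim2 :: "('a, 'b) cat_scheme \<Rightarrow> (('a \<times> 'a) list \<times> ('a \<times> 'a set set))
                    \<Rightarrow> (('a \<times> 'a) list \<times> ('a \<times> 'a set set)) \<Rightarrow> bool" where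
  "sim2 C p q \<longleftrightarrow> snd p = snd q \<and>
     (\<exists>E\<in>snd (snd p). \<forall>g\<in>E. zmap C (fst p) g = zmap C (fst q) g)"

definition rel_on :: "'c set \<Rightarrow> ('c \<Rightarrow> 'c \<Rightarrow> bool) \<Rightarrow> ('c \<times> 'c) set" where
  "rel_on S R = {(p, q). p \<in> S \<and> q \<in> S \<and> R p q}"

definition G1 :: "('a, 'b) cat_scheme \<Rightarrow> (('a \<times> 'a) list \<times> ('a \<times> 'a set set)) set set" where
  "G1 C = ZX C // rel_on (ZX C) (sim1 C)"

definition G2 :: "('a, 'b) cat_scheme \<Rightarrow> (('a \<times> 'a) list \<times> ('a \<times> 'a set set)) set set" where
  "G2 C = ZX C // rel_on (ZX C) (sim2 C)"

end

theory Submission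
  imports Defs
begin


context
  fixes C :: "('a,'b) cat_scheme"
  assumes SC: "small_category C"
begin
lemma src_mor: "a \<in> Mor C \<Longrightarrow> Src C a \<in> Mor C" using SC unfolding small_category_def by blast
lemma rng_mor: "a \<in> Mor C \<Longrightarrow> Rng C a \<in> Mor C" using SC unfolding small_category_def by blast
lemma SS: "a \<in> Mor C \<Longrightarrow> Src C (Src C a) = Src C a" using SC unfolding small_category_def by blast
lemma RS: "a \<in> Mor C \<Longrightarrow> Rng C (Src C a) = Src C a" using SC unfolding small_category_def by blast
lemma SR: "a \<in> Mor C \<Longrightarrow> Src C (Rng C a) = Rng C a" using SC unfolding small_category_def by blast
lemma RR: "a \<in> Mor C \<Longrightarrow> Rng C (Rng C a) = Rng C a" using SC unfolding small_category_def by blast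
lemma lid: "a \<in> Mor C \<Longrightarrow> Cmp C (Rng C a) a = a" using SC unfolding small_category_def by blast
lemma rid: "a \<in> Mor C \<Longrightarrow> Cmp C a (Src C a) = a" using SC unfolding small_category_def by blast
lemma cmp_mor: "a \<in> Mor C \<Longrightarrow> b \<in> Mor C \<Longrightarrow> Src C a = Rng C b \<Longrightarrow> Cmp C a b \<in> Mor C"
  using SC unfolding small_category_def by blast
lemma cmp_src: "a \<in> Mor C \<Longrightarrow> b \<in> Mor C \<Longrightarrow> Src C a = Rng C b \<Longrightarrow> Src C (Cmp C a b) = Src C b"
  using SC unfolding small_category_def by blast
lemma cmp_rng: "a \<in> Mor C \<Longrightarrow> b \<in> Mor C \<Longrightarrow> Src C a = Rng C b \<Longrightarrow> Rng C (Cmp C a b) = Rng C a"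
  using SC unfolding small_category_def by blast
lemma assoc: "a \<in> Mor C \<Longrightarrow> b \<in> Mor C \<Longrightarrow> c \<in> Mor C \<Longrightarrow> Src C a = Rng C b \<Longrightarrow> Src C b = Rng C c \<Longrightarrow>
   Cmp C (Cmp C a b) c = Cmp C a (Cmp C b c)"
  using SC unfolding small_category_def by blast
end

lemma LCD: "left_cancellative C \<Longrightarrow> a \<in> Mor C \<Longrightarrow> b \<in> Mor C \<Longrightarrow> c \<in> Mor C \<Longrightarrow>
  Src C a = Rng C b \<Longrightarrow> Src C a = Rng C c \<Longrightarrow> Cmp C a b = Cmp C a c \<Longrightarrow> b = c"
  unfolding left_cancellative_def by blast

lemma sigmaD:
  assumes LC: "left_cancellative C" and a: "a \<in> Mor C" and s: "sigma C a d = Some h"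
  shows "h \<in> Mor C \<and> Rng C h = Src C a \<and> Cmp C a h = d"
proof -
  from s obtain g where g: "g \<in> Mor C" "Rng C g = Src C a" "Cmp C a g = d"
    and hd: "h = (THE g. g \<in> Mor C \<and> Rng C g = Src C a \<and> Cmp C a g = d)"
    unfolding sigma_def by (auto split: if_splits)
  have "(THE g. g \<in> Mor C \<and> Rng C g = Src C a \<and> Cmp C a g = d) = g"
    apply (rule the_equality) using g apply blast
    using g LCD[OF LC a] by metis
  with hd g show ?thesis by simp
qed

lemma sigma_eq:
  assumes LC: "left_cancellative C" and a: "a \<in> Mor C" and h: "h \<in> Mor C" "Rng C h = Src C a"
  shows "sigma C a (Cmp C a h) = Some h"
proof -
  have "(THE g. g \<in> Mor C \<and> Rng C g = Src C a \<and> Cmp C a g = Cmp C a h) = h"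
    apply (rule the_equality) using h apply blast
    using h LCD[OF LC a] by metis
  with h show ?thesis unfolding sigma_def by auto
qed

lemma zmap_props:
  assumes SC: "small_category C" and LC: "left_cancellative C"
  shows "(\<forall>p\<in>set z. fst p \<in> Mor C \<and> snd p \<in> Mor C) \<Longrightarrow> zmap C z g = Some h \<Longrightarrow>
    (z = [] \<and> h = g) \<or> (z \<noteq> [] \<and> g \<in> Mor C \<and> h \<in> Mor C \<and> Src C h = Src C g \<and> Rng C h = Src C (fst (hd z))
       \<and> Rng C g = Src C (snd (last z)))"
proof (induction z arbitrary: h)
  case Nil
  then show ?case by simp
next
  case (Cons p z)
  obtain a b where p: "p = (a,b)" by force
  from Cons.prems p have ab: "a \<in> Mor C" "b \<in> Mor C" by auto
  from Cons.prems(2) p obtain h1 d where h1: "zmap C z g = Some h1" and t: "tau C b h1 = Some d"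
    and s: "sigma C a d = Some h"
    by (auto split: Option.bind_splits)
  from t have t1: "h1 \<in> Mor C" "Rng C h1 = Src C b" "d = Cmp C b h1"
    unfolding tau_def by (auto split: if_splits)
  from sigmaD[OF LC ab(1) s] have s1: "h \<in> Mor C" "Rng C h = Src C a" "Cmp C a h = d" by auto
  have "Src C h = Src C h1"
    using cmp_src[OF SC ab(1) s1(1)] cmp_src[OF SC ab(2) t1(1)] s1 t1 by simp
  from Cons.IH[OF _ h1] Cons.prems(1) have "(z = [] \<and> h1 = g) \<or> (z \<noteq> [] \<and> g \<in> Mor C \<and> h1 \<in> Mor C \<and> Src C h1 = Src C g
       \<and> Rng C g = Src C (snd (last z)))" by auto
  then show ?case using t1 s1 \<open>Src C h = Src C h1\<close> p by (cases z) auto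
qed

lemma zmap_right:
  assumes SC: "small_category C" and LC: "left_cancellative C"
  shows "(\<forall>p\<in>set z. fst p \<in> Mor C \<and> snd p \<in> Mor C) \<Longrightarrow> zmap C z g = Some h \<Longrightarrow>
    g \<in> Mor C \<Longrightarrow> k \<in> Mor C \<Longrightarrow> Rng C k = Src C g \<Longrightarrow> zmap C z (Cmp C g k) = Some (Cmp C h k)"
proof (induction z arbitrary: h)
  case Nil
  then show ?case by simp
next
  case (Cons p z)
  obtain a b where p: "p = (a,b)" by force
  from Cons.prems p have ab: "a \<in> Mor C" "b \<in> Mor C" by auto
  from Cons.prems(2) p obtain h1 d where h1: "zmap C z g = Some h1" and t: "tau C b h1 = Some d"
    and s: "sigma C a d = Some h"
    by (auto split: Option.bind_splits)
  from t have t1: "h1 \<in> Mor C" "Rng C h1 = Src C b" "d = Cmp C b h1"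
    unfolding tau_def by (auto split: if_splits)
  from sigmaD[OF LC ab(1) s] have s1: "h \<in> Mor C" "Rng C h = Src C a" "Cmp C a h = d" by auto
  have sh: "Src C h = Src C h1"
    using cmp_src[OF SC ab(1) s1(1)] cmp_src[OF SC ab(2) t1(1)] s1 t1 by simp
  have sh1: "Src C h1 = Src C g"
    using zmap_props[OF SC LC _ h1] Cons.prems by auto
  have IH: "zmap C z (Cmp C g k) = Some (Cmp C h1 k)"
    using Cons.IH[OF _ h1] Cons.prems by auto
  have k: "k \<in> Mor C" "Src C h1 = Rng C k" using Cons.prems sh1 by auto
  have h1k: "Cmp C h1 k \<in> Mor C" "Rng C (Cmp C h1 k) = Src C b"
    using cmp_mor[OF SC t1(1) k] cmp_rng[OF SC t1(1) k] t1 by auto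
  have tau2: "tau C b (Cmp C h1 k) = Some (Cmp C b (Cmp C h1 k))"
    using h1k unfolding tau_def by auto
  have "Cmp C b (Cmp C h1 k) = Cmp C (Cmp C b h1) k"
    using assoc[OF SC ab(2) t1(1) k(1)] t1 k by simp
  also have "\<dots> = Cmp C (Cmp C a h) k" using s1 t1 by simp
  also have "\<dots> = Cmp C a (Cmp C h k)"
    using assoc[OF SC ab(1) s1(1) k(1)] s1 k sh by simp
  finally have eq: "Cmp C b (Cmp C h1 k) = Cmp C a (Cmp C h k)" .
  have hk: "Cmp C h k \<in> Mor C" "Rng C (Cmp C h k) = Src C a"
    using cmp_mor[OF SC s1(1) k(1)] cmp_rng[OF SC s1(1) k(1)] s1 k sh by auto
  show ?case using IH tau2 eq sigma_eq[OF LC ab(1) hk] p by simp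
qed




lemma gr_int: "A \<in> gen_ring F \<Longrightarrow> B \<in> gen_ring F \<Longrightarrow> A \<inter> B \<in> gen_ring F"
proof -
  assume a: "A \<in> gen_ring F" and b: "B \<in> gen_ring F"
  have "A - (A - B) \<in> gen_ring F" by (intro gr_diff a b)
  moreover have "A - (A - B) = A \<inter> B" by blast
  ultimately show ?thesis by simp
qed

lemma filterD:
  assumes "is_filter_in R U"
  shows filter_sub: "U \<subseteq> R" and filter_ne: "{} \<notin> U"
    and filter_int: "A \<in> U \<Longrightarrow> B \<in> U \<Longrightarrow> A \<inter> B \<in> U"
    and filter_up: "A \<in> U \<Longrightarrow> B \<in> R \<Longrightarrow> A \<subseteq> B \<Longrightarrow> B \<in> U"
  using assms unfolding is_filter_in_def by auto

lemma point_uf: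
  assumes E: "E \<in> gen_ring F" "g \<in> E"
  shows "is_ultrafilter_in (gen_ring F) {A \<in> gen_ring F. g \<in> A}"
proof -
  let ?U = "{A \<in> gen_ring F. g \<in> A}"
  have f: "is_filter_in (gen_ring F) ?U"
    unfolding is_filter_in_def
  proof (intro conjI ballI impI)
    show "?U \<noteq> {}" using E by auto
    show "?U \<subseteq> gen_ring F" by auto
    show "{} \<notin> ?U" by auto
    show "A \<inter> B \<in> ?U" if "A \<in> ?U" "B \<in> ?U" for A B using that gr_int[of A F B] by auto
    show "B \<in> ?U" if "A \<in> ?U" "B \<in> gen_ring F" "A \<subseteq> B" for A B using that by auto
  qed
  have "V = ?U" if U': "is_filter_in (gen_ring F) V" "?U \<subseteq> V" for V
  proof (rule equalityI)
    show "V \<subseteq> ?U"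
    proof
      fix A assume A: "A \<in> V"
      hence AR: "A \<in> gen_ring F" using filter_sub[OF U'(1)] by auto
      show "A \<in> ?U"
      proof (rule ccontr)
        assume "A \<notin> ?U"
        hence "g \<notin> A" using AR by auto
        moreover have "E - A \<in> gen_ring F" using gr_diff[OF E(1) AR] .
        ultimately have "E - A \<in> ?U" using E(2) by auto
        hence "E - A \<in> V" using U'(2) by auto
        hence "(E - A) \<inter> A \<in> V" using A filter_int[OF U'(1)] by auto
        moreover have "(E - A) \<inter> A = {}" by auto
        ultimately show False using filter_ne[OF U'(1)] by simp
      qed
    qed
  qed (fact U'(2))
  then show ?thesis using f unfolding is_ultrafilter_in_def by auto
qed

lemma zz_mor: "is_zigzag C z \<Longrightarrow> \<forall>p\<in>set z. fst p \<in> Mor C \<and> snd p \<in> Mor C"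
  unfolding is_zigzag_def by auto

lemma pid_mem:
  assumes SC: "small_category C" and LC: "left_cancellative C" and h: "h \<in> Mor C"
  shows "g \<in> Adom C [(h, Rng C h)] \<longleftrightarrow> (\<exists>k\<in>Mor C. Rng C k = Src C h \<and> Cmp C h k = g)"
proof
  assume "g \<in> Adom C [(h, Rng C h)]"
  then obtain d where "tau C (Rng C h) g = Some d" "sigma C h d \<noteq> None"
    unfolding Adom_def by (auto split: Option.bind_splits)
  then have g: "g \<in> Mor C" "Rng C g = Rng C h" "d = Cmp C (Rng C g) g" "sigma C h d \<noteq> None"
    unfolding tau_def using SR[OF SC h] by (auto split: if_splits)
  then have "d = g" using lid[OF SC g(1)] by simp
  with g have "g \<in> Mor C" "sigma C h g \<noteq> None" by auto
  then show "\<exists>k\<in>Mor C. Rng C k = Src C h \<and> Cmp C h k = g"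
    unfolding sigma_def by (auto split: if_splits)
next
  assume "\<exists>k\<in>Mor C. Rng C k = Src C h \<and> Cmp C h k = g"
  then obtain k where k: "k \<in> Mor C" "Rng C k = Src C h" "Cmp C h k = g" by blast
  have g: "g \<in> Mor C" "Rng C g = Rng C h"
    using cmp_mor[OF SC h k(1)] cmp_rng[OF SC h k(1)] k by auto
  have "tau C (Rng C h) g = Some g"
    unfolding tau_def using g SR[OF SC h] lid[OF SC g(1)] by auto
  moreover have "sigma C h g = Some k" using sigma_eq[OF LC h k(1) k(2)] k by simp
  ultimately show "g \<in> Adom C [(h, Rng C h)]" unfolding Adom_def by simp
qed

lemma pid_ring:
  assumes SC: "small_category C" and LC: "left_cancellative C" and h: "h \<in> Mor C"
  shows "Adom C [(h, Rng C h)] \<in> Aring C (Rng C h)"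
proof -
  have "is_zigzag C [(h, Rng C h)]"
    unfolding is_zigzag_def using h rng_mor[OF SC h] RR[OF SC h] by auto
  moreover have "zsrc C [(h, Rng C h)] = Rng C h" unfolding zsrc_def using SR[OF SC h] by simp
  moreover have "h \<in> Adom C [(h, Rng C h)]"
    using pid_mem[OF SC LC h] rid[OF SC h] src_mor[OF SC h] RS[OF SC h] by auto
  ultimately have "Adom C [(h, Rng C h)] \<in> D0 C (Rng C h)" unfolding D0_def by blast
  then show ?thesis unfolding Aring_def by (rule gr_base)
qed

lemma cancel_inv:
  assumes SC: "small_category C" and LC: "left_cancellative C" and NI: "no_nontrivial_invertibles C"
    and h: "h \<in> Mor C" "h' \<in> Mor C" and k: "k \<in> Mor C" "Rng C k = Src C h" "Cmp C h k = h'"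
    and k': "k' \<in> Mor C" "Rng C k' = Src C h'" "Cmp C h' k' = h"
  shows "h = h'"
proof -
  have shk: "Src C h' = Src C k" using cmp_src[OF SC h(1) k(1)] k(2) k(3)[symmetric] by simp
  have shk': "Src C h = Src C k'" using cmp_src[OF SC h(2) k'(1)] k'(2) k'(3)[symmetric] by simp
  have c1: "Src C k = Rng C k'" using k'(2) shk by simp
  have c2: "Src C k' = Rng C k" using k(2) shk' by simp
  have kk': "Cmp C k k' \<in> Mor C" "Rng C (Cmp C k k') = Src C h"
    using cmp_mor[OF SC k(1) k'(1) c1] cmp_rng[OF SC k(1) k'(1) c1] k(2) by auto
  have "Cmp C h (Cmp C k k') = Cmp C (Cmp C h k) k'"
    using assoc[OF SC h(1) k(1) k'(1)] k(2) c1 by simp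
  also have "\<dots> = Cmp C h (Src C h)" using k(3) k'(3) rid[OF SC h(1)] by simp
  finally have e1: "Cmp C k k' = Src C h"
    using LCD[OF LC h(1) kk'(1) src_mor[OF SC h(1)]] kk'(2) RS[OF SC h(1)] by simp
  have k'k: "Cmp C k' k \<in> Mor C" "Rng C (Cmp C k' k) = Src C h'"
    using cmp_mor[OF SC k'(1) k(1) c2] cmp_rng[OF SC k'(1) k(1) c2] k'(2) by auto
  have "Cmp C h' (Cmp C k' k) = Cmp C (Cmp C h' k') k"
    using assoc[OF SC h(2) k'(1) k(1)] k'(2) c2 by simp
  also have "\<dots> = Cmp C h' (Src C h')" using k(3) k'(3) rid[OF SC h(2)] by simp
  finally have e2: "Cmp C k' k = Src C h'"
    using LCD[OF LC h(2) k'k(1) src_mor[OF SC h(2)]] k'k(2) RS[OF SC h(2)] by simp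
  have "invertible_mor C k"
    unfolding invertible_mor_def
  proof (intro conjI bexI[of _ k'])
    show "k \<in> Mor C" "k' \<in> Mor C" by (fact k(1), fact k'(1))
    show "Src C k = Rng C k'" by (fact c1)
    show "Src C k' = Rng C k" by (fact c2)
    show "Cmp C k k' = Rng C k" using e1 k(2) by simp
    show "Cmp C k' k = Src C k" using e2 shk by simp
  qed
  hence "Src C k = k" using NI unfolding no_nontrivial_invertibles_def Obj_def by blast
  hence "k = Src C h" using k(2) RS[OF SC k(1)] by metis
  thus ?thesis using k(3) rid[OF SC h(1)] by simp
qed




lemma half:
  assumes SC: "small_category C" and LC: "left_cancellative C"
    and x: "x \<in> Xsp C" and z1: "is_zigzag C z1" and z2: "is_zigzag C z2"
    and s1: "zsrc C z1 = fst x" and s2: "zsrc C z2 = fst x"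
    and a1: "Adom C z1 \<in> snd x" and a2: "Adom C z2 \<in> snd x"
    and m1: "zmap C z1 g = Some h1" and m2: "zmap C z2 g = Some h2"
    and E: "E \<in> snd x" "g \<in> E" and eq: "\<forall>y\<in>hatE C (fst x) E. Phi C z1 y = Phi C z2 y"
  shows "\<exists>k\<in>Mor C. Rng C k = Src C h1 \<and> Cmp C h1 k = h2"
proof -
  obtain v U where xv: "x = (v, U)" by force
  have v: "v \<in> Obj C" and uf: "is_ultrafilter_in (Aring C v) U"
    using x xv unfolding Xsp_def by auto
  have fU: "is_filter_in (Aring C v) U" using uf unfolding is_ultrafilter_in_def by auto
  have ER: "E \<in> Aring C v" using filter_sub[OF fU] E xv by auto
  define Ug where "Ug = {A \<in> Aring C v. g \<in> A}"
  have ufg: "is_ultrafilter_in (Aring C v) Ug"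
    unfolding Ug_def Aring_def using point_uf[of E "D0 C v" g] ER E(2) unfolding Aring_def by auto
  have yX: "(v, Ug) \<in> Xsp C" using v ufg unfolding Xsp_def by auto
  have yE: "(v, Ug) \<in> hatE C (fst x) E" using yX ER E(2) xv unfolding hatE_def Ug_def by auto
  have zm1: "\<forall>p\<in>set z1. fst p \<in> Mor C \<and> snd p \<in> Mor C" by (rule zz_mor[OF z1])
  have zm2: "\<forall>p\<in>set z2. fst p \<in> Mor C \<and> snd p \<in> Mor C" by (rule zz_mor[OF z2])
  have ne1: "z1 \<noteq> []" using z1 unfolding is_zigzag_def by auto
  have P1: "g \<in> Mor C" "h1 \<in> Mor C" "Src C h1 = Src C g" "Rng C h1 = zrng C z1" "Rng C g = v"
    using zmap_props[OF SC LC zm1 m1] ne1 s1 xv unfolding zrng_def zsrc_def by auto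
  have A1R: "Adom C z1 \<in> Aring C v" using filter_sub[OF fU] a1 xv by auto
  have A2R: "Adom C z2 \<in> Aring C v" using filter_sub[OF fU] a2 xv by auto
  have g1: "g \<in> Adom C z1" using m1 unfolding Adom_def by auto
  have g2: "g \<in> Adom C z2" using m2 unfolding Adom_def by auto
  have Phi1: "Phi C z1 (v, Ug) = Some (zrng C z1, {F \<in> Aring C (zrng C z1).
                   \<exists>E\<in>Ug. zimage C z1 (E \<inter> Adom C z1) \<subseteq> F})"
  proof -
    have "(v, Ug) \<in> hatE C (zsrc C z1) (Adom C z1)"
      using yX s1 xv A1R g1 unfolding hatE_def Ug_def by auto
    then show ?thesis unfolding Phi_def by simp
  qed
  have Phi2: "Phi C z2 (v, Ug) = Some (zrng C z2, {F \<in> Aring C (zrng C z2).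
                   \<exists>E\<in>Ug. zimage C z2 (E \<inter> Adom C z2) \<subseteq> F})"
  proof -
    have "(v, Ug) \<in> hatE C (zsrc C z2) (Adom C z2)"
      using yX s2 xv A2R g2 unfolding hatE_def Ug_def by auto
    then show ?thesis unfolding Phi_def by simp
  qed
  have PE: "Phi C z1 (v, Ug) = Phi C z2 (v, Ug)" using eq yE by blast
  let ?gL = "Adom C [(g, Rng C g)]"
  let ?hL = "Adom C [(h1, Rng C h1)]"
  have gLR: "?gL \<in> Aring C v" using pid_ring[OF SC LC P1(1)] P1(5) by simp
  have ggL: "g \<in> ?gL" using pid_mem[OF SC LC P1(1)] rid[OF SC P1(1)] src_mor[OF SC P1(1)] RS[OF SC P1(1)]
    by auto
  have gLU: "?gL \<in> Ug" using gLR ggL unfolding Ug_def by auto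
  have hLR: "?hL \<in> Aring C (zrng C z1)" using pid_ring[OF SC LC P1(2)] P1(4) by simp
  have sub: "zimage C z1 (?gL \<inter> Adom C z1) \<subseteq> ?hL"
  proof
    fix h'' assume "h'' \<in> zimage C z1 (?gL \<inter> Adom C z1)"
    then obtain g'' where g'': "g'' \<in> ?gL" "zmap C z1 g'' = Some h''" unfolding zimage_def by auto
    then obtain k where k: "k \<in> Mor C" "Rng C k = Src C g" "Cmp C g k = g''"
      using pid_mem[OF SC LC P1(1)] by auto
    have "zmap C z1 g'' = Some (Cmp C h1 k)"
      using zmap_right[OF SC LC zm1 m1 P1(1) k(1) k(2)] k(3) by simp
    then have "h'' = Cmp C h1 k" using g''(2) by simp
    then show "h'' \<in> ?hL" using pid_mem[OF SC LC P1(2)] k P1(3) by auto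
  qed
  have mem1: "?hL \<in> {F \<in> Aring C (zrng C z1). \<exists>E\<in>Ug. zimage C z1 (E \<inter> Adom C z1) \<subseteq> F}"
    using hLR gLU sub by auto
  have "{F \<in> Aring C (zrng C z1). \<exists>E\<in>Ug. zimage C z1 (E \<inter> Adom C z1) \<subseteq> F}
      = {F \<in> Aring C (zrng C z2). \<exists>E\<in>Ug. zimage C z2 (E \<inter> Adom C z2) \<subseteq> F}"
  proof -
    have "snd (the (Phi C z1 (v, Ug))) = snd (the (Phi C z2 (v, Ug)))" using PE by simp
    then show ?thesis unfolding Phi1 Phi2 option.sel snd_conv .
  qed
  hence "?hL \<in> {F \<in> Aring C (zrng C z2). \<exists>E\<in>Ug. zimage C z2 (E \<inter> Adom C z2) \<subseteq> F}"
    using mem1 by (simp only:)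
  then obtain G where G: "G \<in> Ug" "zimage C z2 (G \<inter> Adom C z2) \<subseteq> ?hL" by auto
  have "g \<in> G" using G(1) unfolding Ug_def by auto
  hence "h2 \<in> zimage C z2 (G \<inter> Adom C z2)" using g2 m2 unfolding zimage_def by auto
  hence "h2 \<in> ?hL" using G(2) by auto
  then show ?thesis using pid_mem[OF SC LC P1(2)] by auto
qed




lemma ZXD: "(z, x) \<in> ZX C \<Longrightarrow> is_zigzag C z \<and> x \<in> Xsp C \<and> zsrc C z = fst x \<and> Adom C z \<in> snd x"
  unfolding ZX_def by auto

lemma XspD: "x \<in> Xsp C \<Longrightarrow> fst x \<in> Obj C \<and> is_filter_in (Aring C (fst x)) (snd x)"
  unfolding Xsp_def is_ultrafilter_in_def by auto

lemma s1s2: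
  assumes SC: "small_category C" and LC: "left_cancellative C" and NI: "no_nontrivial_invertibles C"
    and p: "(z1, x) \<in> ZX C" and q: "(z2, x) \<in> ZX C"
    and E: "E \<in> snd x" and eq: "\<forall>y\<in>hatE C (fst x) E. Phi C z1 y = Phi C z2 y"
  shows "\<exists>E\<in>snd x. \<forall>g\<in>E. zmap C z1 g = zmap C z2 g"
proof -
  note P = ZXD[OF p] and Q = ZXD[OF q]
  have fU: "is_filter_in (Aring C (fst x)) (snd x)" using XspD[of x C] P by auto
  let ?E0 = "E \<inter> Adom C z1 \<inter> Adom C z2"
  have E0: "?E0 \<in> snd x" using filter_int[OF fU] E P Q by auto
  have "zmap C z1 g = zmap C z2 g" if g: "g \<in> ?E0" for g
  proof -
    obtain h1 where m1: "zmap C z1 g = Some h1" using g unfolding Adom_def by auto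
    obtain h2 where m2: "zmap C z2 g = Some h2" using g unfolding Adom_def by auto
    have ne1: "z1 \<noteq> []" "z2 \<noteq> []" using P Q unfolding is_zigzag_def by auto
    have h1: "h1 \<in> Mor C" using zmap_props[OF SC LC zz_mor[of C z1] m1] P ne1 by auto
    have h2: "h2 \<in> Mor C" using zmap_props[OF SC LC zz_mor[of C z2] m2] Q ne1 by auto
    obtain k where k: "k \<in> Mor C" "Rng C k = Src C h1" "Cmp C h1 k = h2"
      using half[OF SC LC _ _ _ _ _ _ _ m1 m2 E _ eq] P Q g by auto
    obtain k' where k': "k' \<in> Mor C" "Rng C k' = Src C h2" "Cmp C h2 k' = h1"
      using half[OF SC LC _ _ _ _ _ _ _ m2 m1 E, of] P Q g eq by fastforce
    have "h1 = h2" by (rule cancel_inv[OF SC LC NI h1 h2 k k'])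
    then show ?thesis using m1 m2 by simp
  qed
  then show ?thesis using E0 by blast
qed

lemma s2s1:
  assumes SC: "small_category C" and LC: "left_cancellative C"
    and p: "(z1, x) \<in> ZX C" and q: "(z2, x) \<in> ZX C"
    and E: "E \<in> snd x" and eq: "\<forall>g\<in>E. zmap C z1 g = zmap C z2 g"
  shows "\<exists>E\<in>snd x. \<forall>y\<in>hatE C (fst x) E. Phi C z1 y = Phi C z2 y"
proof -
  note P = ZXD[OF p] and Q = ZXD[OF q]
  have fU: "is_filter_in (Aring C (fst x)) (snd x)" using XspD[of x C] P by auto
  let ?E0 = "E \<inter> Adom C z1 \<inter> Adom C z2"
  have E0: "?E0 \<in> snd x" using filter_int[OF fU] E P Q by auto
  have "?E0 \<noteq> {}" using E0 filter_ne[OF fU] by auto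
  then obtain g0 where g0: "g0 \<in> ?E0" by blast
  obtain h where m1: "zmap C z1 g0 = Some h" using g0 unfolding Adom_def by auto
  have m2: "zmap C z2 g0 = Some h" using m1 g0 eq by auto
  have ne1: "z1 \<noteq> []" "z2 \<noteq> []" using P Q unfolding is_zigzag_def by auto
  have "Rng C h = zrng C z1" using zmap_props[OF SC LC zz_mor[of C z1] m1] P ne1
    unfolding zrng_def by auto
  moreover have "Rng C h = zrng C z2" using zmap_props[OF SC LC zz_mor[of C z2] m2] Q ne1
    unfolding zrng_def by auto
  ultimately have rr: "zrng C z1 = zrng C z2" by simp
  have zi: "zimage C z1 A = zimage C z2 A" if "A \<subseteq> ?E0" for A
    using that eq unfolding zimage_def by force
  have "Phi C z1 y = Phi C z2 y" if y: "y \<in> hatE C (fst x) ?E0" for y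
  proof -
    obtain v U where yv: "y = (v, U)" by force
    have v: "v = fst x" and yX: "y \<in> Xsp C" and EU: "?E0 \<in> U" using y yv unfolding hatE_def by auto
    have fV: "is_filter_in (Aring C v) U" using XspD[OF yX] yv by auto
    have A1: "Adom C z1 \<in> U" using filter_up[OF fV EU] filter_sub[OF fU] P v by auto
    have A2: "Adom C z2 \<in> U" using filter_up[OF fV EU] filter_sub[OF fU] Q v by auto
    have h1: "y \<in> hatE C (zsrc C z1) (Adom C z1)" using y yv A1 P v unfolding hatE_def by auto
    have h2: "y \<in> hatE C (zsrc C z2) (Adom C z2)" using y yv A2 Q v unfolding hatE_def by auto
    have dir: "\<exists>E'\<in>U. zimage C zb (E' \<inter> Adom C zb) \<subseteq> F"
      if "E' \<in> U" "zimage C za (E' \<inter> Adom C za) \<subseteq> F"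
        and ab: "(za = z1 \<and> zb = z2) \<or> (za = z2 \<and> zb = z1)" for za zb E' F
    proof (rule bexI)
      show "E' \<inter> ?E0 \<in> U" using filter_int[OF fV that(1) EU] .
      have ia: "(E' \<inter> ?E0) \<inter> Adom C za = E' \<inter> ?E0" "(E' \<inter> ?E0) \<inter> Adom C zb = E' \<inter> ?E0"
        using ab by auto
      have "zimage C z1 (E' \<inter> ?E0) = zimage C z2 (E' \<inter> ?E0)" by (rule zi) auto
      hence "zimage C zb (E' \<inter> ?E0) = zimage C za (E' \<inter> ?E0)" using ab by auto
      hence "zimage C zb ((E' \<inter> ?E0) \<inter> Adom C zb) = zimage C za ((E' \<inter> ?E0) \<inter> Adom C za)"
        unfolding ia .
      also have "\<dots> \<subseteq> zimage C za (E' \<inter> Adom C za)" unfolding zimage_def by auto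
      finally show "zimage C zb ((E' \<inter> ?E0) \<inter> Adom C zb) \<subseteq> F" using that(2) by auto
    qed
    have "{F \<in> Aring C (zrng C z1). \<exists>E\<in>snd y. zimage C z1 (E \<inter> Adom C z1) \<subseteq> F}
        = {F \<in> Aring C (zrng C z2). \<exists>E\<in>snd y. zimage C z2 (E \<inter> Adom C z2) \<subseteq> F}"
      unfolding rr
    proof (rule Collect_cong, rule conj_cong[OF refl])
      fix F
      show "(\<exists>E\<in>snd y. zimage C z1 (E \<inter> Adom C z1) \<subseteq> F) = (\<exists>E\<in>snd y. zimage C z2 (E \<inter> Adom C z2) \<subseteq> F)"
      proof
        assume "\<exists>E\<in>snd y. zimage C z1 (E \<inter> Adom C z1) \<subseteq> F"
        then obtain E' where "E' \<in> U" "zimage C z1 (E' \<inter> Adom C z1) \<subseteq> F" using yv by auto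
        from dir[where za=z1 and zb=z2, OF this] show "\<exists>E\<in>snd y. zimage C z2 (E \<inter> Adom C z2) \<subseteq> F"
          using yv by simp
      next
        assume "\<exists>E\<in>snd y. zimage C z2 (E \<inter> Adom C z2) \<subseteq> F"
        then obtain E' where "E' \<in> U" "zimage C z2 (E' \<inter> Adom C z2) \<subseteq> F" using yv by auto
        from dir[where za=z2 and zb=z1, OF this] show "\<exists>E\<in>snd y. zimage C z1 (E \<inter> Adom C z1) \<subseteq> F"
          using yv by simp
      qed
    qed
    then show ?thesis unfolding Phi_def using h1 h2 rr by simp
  qed
  then show ?thesis using E0 by blast
qed




theorem mainTheorem3:
  fixes C :: "'a cat"
  assumes "LCSC C"
    and "no_nontrivial_invertibles C"
  shows "(\<forall>p\<in>ZX C. \<forall>q\<in>ZX C. sim1 C p q \<longleftrightarrow> sim2 C p q) \<and> G1 C = G2 C"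
proof -
  have SC: "small_category C" and LC: "left_cancellative C" using assms(1) unfolding LCSC_def by auto
  have eqv: "sim1 C p q \<longleftrightarrow> sim2 C p q" if p: "p \<in> ZX C" and q: "q \<in> ZX C" for p q
  proof -
    obtain z1 x where pz: "p = (z1, x)" by (cases p) auto
    obtain z2 x2 where qz: "q = (z2, x2)" by (cases q) auto
    show ?thesis
    proof
      assume s: "sim1 C p q"
      then have xx: "x2 = x" using pz qz unfolding sim1_def by simp
      from s obtain E where "E \<in> snd x" "\<forall>y\<in>hatE C (fst x) E. Phi C z1 y = Phi C z2 y"
        using pz qz unfolding sim1_def by auto
      from s1s2[OF SC LC assms(2) _ _ this] p q pz qz xx
      show "sim2 C p q" unfolding sim2_def by auto
    next
      assume s: "sim2 C p q"
      then have xx: "x2 = x" using pz qz unfolding sim2_def by simp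
      from s obtain E where "E \<in> snd x" "\<forall>g\<in>E. zmap C z1 g = zmap C z2 g"
        using pz qz unfolding sim2_def by auto
      from s2s1[OF SC LC _ _ this] p q pz qz xx
      show "sim1 C p q" unfolding sim1_def by auto
    qed
  qed
  have "rel_on (ZX C) (sim1 C) = rel_on (ZX C) (sim2 C)"
    unfolding rel_on_def using eqv by auto
  then show ?thesis using eqv unfolding G1_def G2_def by auto
qed


end
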